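(* Let $G$ be a finite nonabelian group having a nonnormal subgroup $S$ of index $[G:S]=3$. Then $\beta(G)\ge \frac{4}{3}|G|$.
   Context: For a nonempty subset $X$ of a group $G$, $Q(X):=\{xy^{-1}: x,y\in X\}$. Nonempty subsets $S_1,S_2,S_3$ of $G$ satisfy the Triple Product Property (TPP) if for all $s_i\in Q(S_i)$: $s_1s_2s_3=1$ iff $s_1=s_2=s_3=1$. A group $G$ realizes $\langle n,p,m\rangle$ if there are subsets $S_1,S_2,S_3\subseteq G$ with $|S_1|=n$, $|S_2|=p$, $|S_3|=m$ satisfying the TPP. For a nontrivial finite group $G$, the TPP capacity is $\beta(G):=\max\{npm : G \text{ realizes } \langle n,p,m\rangle\}$. *)

theory Defs
  imports "HOL-Algebra.Algebra"
begin

definition quot_set :: "('a, 'b) monoid_scheme \<Rightarrow> 'a set \<Rightarrow> 'a set" where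
  "quot_set G A = {monoid.mult G x (m_inv G y) | x y. x \<in> A \<and> y \<in> A}"

definition TPP :: "('a, 'b) monoid_scheme \<Rightarrow> 'a set \<Rightarrow> 'a set \<Rightarrow> 'a set \<Rightarrow> bool" where
  "TPP G S1 S2 S3 \<longleftrightarrow>
     (\<forall>s1 \<in> quot_set G S1. \<forall>s2 \<in> quot_set G S2. \<forall>s3 \<in> quot_set G S3.
        (monoid.mult G (monoid.mult G s1 s2) s3 = one G) \<longleftrightarrow>
        (s1 = one G \<and> s2 = one G \<and> s3 = one G))"

definition realizes :: "('a, 'b) monoid_scheme \<Rightarrow> nat \<Rightarrow> nat \<Rightarrow> nat \<Rightarrow> bool" where
  "realizes G n p m \<longleftrightarrow>
     (\<exists>S1 S2 S3. S1 \<subseteq> carrier G \<and> S2 \<subseteq> carrier G \<and> S3 \<subseteq> carrier G \<and>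
        S1 \<noteq> {} \<and> S2 \<noteq> {} \<and> S3 \<noteq> {} \<and>
        card S1 = n \<and> card S2 = p \<and> card S3 = m \<and> TPP G S1 S2 S3)"

definition tpp_capacity :: "('a, 'b) monoid_scheme \<Rightarrow> nat" where
  "tpp_capacity G = Max {n * p * m | n p m. realizes G n p m}"

end

theory Submission
  imports Defs
begin

context group
begin

lemma rc_cancel:
  assumes "M \<subseteq> carrier G" "M' \<subseteq> carrier G" "g \<in> carrier G" "M #> g = M' #> g"
  shows "M = M'"
proof -
  have "M = (M #> g) #> inv g" using assms(1,3) by (simp add: coset_mult_assoc)
  also have "\<dots> = (M' #> g) #> inv g" using assms by simp
  also have "\<dots> = M'" using assms(2,3) by (simp add: coset_mult_assoc)
  finally show ?thesis .
qed

lemma rc_mem_iff: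
  assumes "subgroup S G" "x \<in> carrier G"
  shows "x \<in> S \<longleftrightarrow> S #> x = S"
  using assms coset_join1 coset_join2 by blast

lemma exists_bc:
  assumes S: "subgroup S G" and c3: "card (rcosets S) = 3" and nn: "\<not> (S \<lhd> G)"
    and fin: "finite (carrier G)"
  shows "\<exists>b c. b \<in> carrier G \<and> c \<in> carrier G \<and> b \<notin> S \<and> c \<notin> S \<and> b \<otimes> c \<notin> S
     \<and> c \<otimes> b \<notin> S \<and> b \<otimes> inv c \<notin> S \<and> inv b \<otimes> c \<notin> S"
proof -
  have Ssub: "S \<subseteq> carrier G" using S subgroup.subset by blast
  obtain x h where x: "x \<in> carrier G" and h: "h \<in> S" and xh: "x \<otimes> h \<otimes> inv x \<notin> S"
    using nn S normal_inv_iff by blast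
  have hc: "h \<in> carrier G" using h Ssub by blast
  define a where "a = inv x"
  define b where "b = x \<otimes> h \<otimes> inv x"
  have ac: "a \<in> carrier G" and bc: "b \<in> carrier G" using x hc by (auto simp: a_def b_def)
  have bS: "b \<notin> S" using xh b_def by simp
  have abS: "a \<otimes> b \<otimes> inv a \<in> S"
  proof -
    have "a \<otimes> b \<otimes> inv a = h" using x hc unfolding a_def b_def
      apply (simp add: m_assoc[symmetric]) by (simp add: m_assoc)
    thus ?thesis using h by simp
  qed
  define conj where "conj = (\<lambda>t. inv a \<otimes> t \<otimes> a)"
  have inj: "inj_on conj S"
  proof
    fix t u assume "t \<in> S" "u \<in> S" "conj t = conj u"
    thus "t = u" using Ssub ac unfolding conj_def
      by (simp add: m_assoc[symmetric] subsetD)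
  qed
  have finS: "finite S" using fin Ssub finite_subset by blast
  obtain s where sS: "s \<in> S" and asS: "a \<otimes> s \<otimes> inv a \<notin> S"
  proof (rule ccontr)
    assume "\<not> thesis"
    with that have all: "\<forall>s\<in>S. a \<otimes> s \<otimes> inv a \<in> S" by blast
    have sub: "S \<subseteq> conj ` S"
    proof
      fix s assume sS: "s \<in> S"
      have sc: "s \<in> carrier G" using sS Ssub by blast
      have "conj (a \<otimes> s \<otimes> inv a) = s" unfolding conj_def using ac sc
        apply (simp add: m_assoc[symmetric]) by (simp add: m_assoc)
      thus "s \<in> conj ` S" using all sS by (metis image_eqI)
    qed
    have "card (conj ` S) = card S" using inj card_image by blast
    hence "conj ` S = S" using sub finS card_subset_eq[of "conj ` S" S] by simp
    moreover have "b = conj h" unfolding conj_def b_def a_def using x hc by simp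
    ultimately show False using h bS by blast
  qed
  have sc: "s \<in> carrier G" using sS Ssub by blast
  note simps = coset_mult_assoc[symmetric] r_coset_subset_G Ssub ac bc sc
  have mem: "\<And>y. y \<in> carrier G \<Longrightarrow> y \<in> S \<longleftrightarrow> S #> y = S" by (rule rc_mem_iff[OF S])
  have isS: "inv s \<in> S" using subgroup.m_inv_closed[OF S sS] .
  have Ss: "S #> s = S" "S #> inv s = S"
    using coset_join2[OF sc S sS] coset_join2[OF inv_closed[OF sc] S isS] by auto
  have Saa: "(S #> a) #> inv a = S" using ac Ssub by (simp add: coset_mult_assoc m_assoc)
  have E1: "(S #> a) #> b = S #> a"
  proof -
    have "S #> (a \<otimes> b \<otimes> inv a) = S" using mem abS ac bc by simp
    hence "((S #> a) #> b) #> inv a = (S #> a) #> inv a" using Saa by (simp add: simps)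
    thus ?thesis using rc_cancel[of "(S #> a) #> b" "S #> a" "inv a"] by (simp add: simps)
  qed
  have E2: "(S #> a) #> s \<noteq> S #> a"
  proof
    assume "(S #> a) #> s = S #> a"
    hence "((S #> a) #> s) #> inv a = S" using Saa by simp
    hence "S #> (a \<otimes> s \<otimes> inv a) = S" by (simp add: simps)
    thus False using mem asS ac sc by simp
  qed
  have Nb: "S #> b \<noteq> S" using mem bS bc by simp
  have Na: "S #> a \<noteq> S"
  proof
    assume "S #> a = S" thus False using E1 Nb by simp
  qed
  have Nab: "S #> b \<noteq> S #> a"
  proof
    assume e: "S #> b = S #> a"
    hence "(S #> b) #> b = S #> b" using E1 by simp
    hence "S #> b = S" using rc_cancel[of "S #> b" S b] by (simp add: simps)
    thus False using Nb by simp
  qed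
  have fR: "finite (rcosets S)" using c3 card.infinite by fastforce
  have sub3: "{S, S #> b, S #> a} \<subseteq> rcosets S"
    using rcosetsI[OF Ssub] ac bc subgroup.subgroup_in_rcosets[OF S is_group] by blast
  have "card {S, S #> b, S #> a} = 3" using Na Nb Nab by auto
  hence R: "{S, S #> b, S #> a} = rcosets S" using card_subset_eq[OF fR sub3] c3 by simp
  have tri: "\<And>w. w \<in> carrier G \<Longrightarrow> S #> w = S \<or> S #> w = S #> b \<or> S #> w = S #> a"
  proof -
    fix w assume "w \<in> carrier G"
    hence "S #> w \<in> rcosets S" using rcosetsI[OF Ssub] by blast
    thus "S #> w = S \<or> S #> w = S #> b \<or> S #> w = S #> a" using R by blast
  qed
  have F2: "(S #> b) #> b = S"
  proof -
    have t: "(S #> b) #> b = S \<or> (S #> b) #> b = S #> b \<or> (S #> b) #> b = S #> a"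
      using tri[of "b \<otimes> b"] bc by (simp add: simps)
    have "(S #> b) #> b \<noteq> S #> b"
    proof
      assume "(S #> b) #> b = S #> b"
      hence "S #> b = S" using rc_cancel[of "S #> b" S b] by (simp add: simps)
      thus False using Nb by simp
    qed
    moreover have "(S #> b) #> b \<noteq> S #> a"
    proof
      assume "(S #> b) #> b = S #> a"
      hence "(S #> b) #> b = (S #> a) #> b" using E1 by simp
      hence "S #> b = S #> a" using rc_cancel[of "S #> b" "S #> a" b] by (simp add: simps)
      thus False using Nab by simp
    qed
    ultimately show ?thesis using t by blast
  qed
  have F3: "(S #> a) #> s = S #> b"
  proof -
    have t: "(S #> a) #> s = S \<or> (S #> a) #> s = S #> b \<or> (S #> a) #> s = S #> a"
      using tri[of "a \<otimes> s"] ac sc by (simp add: simps)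
    have "(S #> a) #> s \<noteq> S"
    proof
      assume "(S #> a) #> s = S"
      hence "(S #> a) #> s = S #> s" using Ss by simp
      hence "S #> a = S" using rc_cancel[of "S #> a" S s] by (simp add: simps)
      thus False using Na by simp
    qed
    thus ?thesis using t E2 by blast
  qed
  have F4: "(S #> b) #> s = S #> a"
  proof -
    have t: "(S #> b) #> s = S \<or> (S #> b) #> s = S #> b \<or> (S #> b) #> s = S #> a"
      using tri[of "b \<otimes> s"] bc sc by (simp add: simps)
    have "(S #> b) #> s \<noteq> S"
    proof
      assume "(S #> b) #> s = S"
      hence "(S #> b) #> s = S #> s" using Ss by simp
      hence "S #> b = S" using rc_cancel[of "S #> b" S s] by (simp add: simps)
      thus False using Nb by simp
    qed
    moreover have "(S #> b) #> s \<noteq> S #> b"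
    proof
      assume "(S #> b) #> s = S #> b"
      hence "(S #> b) #> s = (S #> a) #> s" using F3 by simp
      hence "S #> b = S #> a" using rc_cancel[of "S #> b" "S #> a" s] by (simp add: simps)
      thus False using Nab by simp
    qed
    ultimately show ?thesis using t by blast
  qed
  have G1: "(S #> b) #> inv s = S #> a"
  proof -
    have "((S #> a) #> s) #> inv s = S #> a" using ac sc Ssub by (simp add: coset_mult_assoc m_assoc)
    thus ?thesis using F3 by simp
  qed
  have G2: "(S #> a) #> inv b = S #> a"
  proof -
    have "((S #> a) #> b) #> inv b = S #> a" using ac bc Ssub by (simp add: coset_mult_assoc m_assoc)
    thus ?thesis using E1 by simp
  qed
  have G3: "S #> inv b = S #> b"
  proof -
    have "((S #> b) #> b) #> inv b = S #> b" using bc Ssub by (simp add: coset_mult_assoc m_assoc)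
    thus ?thesis using F2 by simp
  qed
  define c where "c = inv s \<otimes> b \<otimes> s"
  have cc: "c \<in> carrier G" using sc bc c_def by simp
  have invc: "inv c = inv s \<otimes> inv b \<otimes> s" using sc bc unfolding c_def
    by (simp add: inv_mult_group m_assoc)
  have T1: "c \<notin> S"
  proof -
    have "S #> c = S #> a" unfolding c_def using Ss F4 by (simp add: simps)
    thus ?thesis using mem cc Na by simp
  qed
  have T2: "b \<otimes> c \<notin> S"
  proof -
    have "S #> (b \<otimes> c) = S #> b" unfolding c_def using G1 E1 F3 by (simp add: simps)
    thus ?thesis using mem cc bc Nb by simp
  qed
  have T3: "c \<otimes> b \<notin> S"
  proof -
    have "S #> (c \<otimes> b) = S #> a" unfolding c_def using Ss F4 E1 by (simp add: simps)
    thus ?thesis using mem cc bc Na by simp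
  qed
  have T4: "b \<otimes> inv c \<notin> S"
  proof -
    have "S #> (b \<otimes> inv c) = S #> b" unfolding invc using G1 G2 F3 by (simp add: simps)
    thus ?thesis using mem cc bc Nb by simp
  qed
  have T5: "inv b \<otimes> c \<notin> S"
  proof -
    have "S #> (inv b \<otimes> c) = S #> b" unfolding c_def using G3 G1 E1 F3 by (simp add: simps)
    thus ?thesis using mem cc bc Nb by simp
  qed
  show ?thesis using bc cc bS T1 T2 T3 T4 T5 by blast
qed

lemma tpp_S:
  assumes S: "subgroup S G" and bc: "b \<in> carrier G" and cc: "c \<in> carrier G"
    and h: "b \<notin> S" "c \<notin> S" "b \<otimes> c \<notin> S" "c \<otimes> b \<notin> S" "b \<otimes> inv c \<notin> S" "inv b \<otimes> c \<notin> S"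
  shows "TPP G S {\<one>, b} {\<one>, c}"
proof -
  have Ssub: "S \<subseteq> carrier G" using S subgroup.subset by blast
  have Q1: "quot_set G S \<subseteq> S"
    using S unfolding quot_set_def by (auto intro: subgroup.m_closed subgroup.m_inv_closed)
  have Q2: "quot_set G {\<one>, b} \<subseteq> {\<one>, b, inv b}" using bc unfolding quot_set_def by auto
  have Q3: "quot_set G {\<one>, c} \<subseteq> {\<one>, c, inv c}" using cc unfolding quot_set_def by auto
  have ni: "\<And>x. x \<in> carrier G \<Longrightarrow> x \<notin> S \<Longrightarrow> inv x \<notin> S"
    using S by (metis inv_inv subgroup.m_inv_closed)
  have key: "\<And>y z. y \<in> {\<one>, b, inv b} \<Longrightarrow> z \<in> {\<one>, c, inv c} \<Longrightarrow> y \<otimes> z \<in> S \<Longrightarrow> y = \<one> \<and> z = \<one>"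
  proof -
    fix y z assume y: "y \<in> {\<one>, b, inv b}" and z: "z \<in> {\<one>, c, inv c}" and yz: "y \<otimes> z \<in> S"
    have icb: "inv b \<otimes> inv c = inv (c \<otimes> b)" using bc cc by (simp add: inv_mult_group)
    have ibc: "inv b \<otimes> inv c \<notin> S" using icb ni[of "c \<otimes> b"] h bc cc by simp
    show "y = \<one> \<and> z = \<one>"
      using y z yz h bc cc ni[of b] ni[of c] ibc by auto
  qed
  show ?thesis unfolding TPP_def
  proof (intro ballI iffI)
    fix s1 s2 s3 assume s1: "s1 \<in> quot_set G S" and s2: "s2 \<in> quot_set G {\<one>, b}"
      and s3: "s3 \<in> quot_set G {\<one>, c}" and e: "s1 \<otimes> s2 \<otimes> s3 = \<one>"
    have s1S: "s1 \<in> S" using s1 Q1 by blast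
    have s2' : "s2 \<in> {\<one>, b, inv b}" using s2 Q2 by blast
    have s3' : "s3 \<in> {\<one>, c, inv c}" using s3 Q3 by blast
    have c1: "s1 \<in> carrier G" using s1S Ssub by blast
    have c2: "s2 \<in> carrier G" using s2' bc by auto
    have c3: "s3 \<in> carrier G" using s3' cc by auto
    have e2: "s1 \<otimes> (s2 \<otimes> s3) = \<one>" using e c1 c2 c3 by (simp add: m_assoc)
    have "s2 \<otimes> s3 = (inv s1 \<otimes> s1) \<otimes> (s2 \<otimes> s3)" using c1 c2 c3 by simp
    also have "\<dots> = inv s1 \<otimes> (s1 \<otimes> (s2 \<otimes> s3))" using c1 c2 c3 by (rule_tac m_assoc) simp_all
    also have "\<dots> = inv s1" using e2 c1 by simp
    finally have "s2 \<otimes> s3 = inv s1" .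
    hence "s2 \<otimes> s3 \<in> S" using s1S S subgroup.m_inv_closed by metis
    hence "s2 = \<one> \<and> s3 = \<one>" using key s2' s3' by blast
    thus "s1 = \<one> \<and> s2 = \<one> \<and> s3 = \<one>" using e c1 by simp
  next
    fix s1 s2 s3 assume "s1 = \<one> \<and> s2 = \<one> \<and> s3 = \<one>"
    thus "s1 \<otimes> s2 \<otimes> s3 = \<one>" by simp
  qed
qed

lemma main_in:
  assumes fin: "finite (carrier G)" and S: "subgroup S G" and nn: "\<not> (S \<lhd> G)"
    and c3: "card (rcosets S) = 3"
  shows "real (tpp_capacity G) \<ge> 4 / 3 * real (order G)"
proof -
  have Ssub: "S \<subseteq> carrier G" using S subgroup.subset by blast
  obtain b c where bc: "b \<in> carrier G" "c \<in> carrier G" and h: "b \<notin> S" "c \<notin> S" "b \<otimes> c \<notin> S"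
     "c \<otimes> b \<notin> S" "b \<otimes> inv c \<notin> S" "inv b \<otimes> c \<notin> S"
    using exists_bc[OF S c3 nn fin] by blast
  have one: "\<one> \<in> S" using S subgroup.one_closed by blast
  have b1: "b \<noteq> \<one>" and c1: "c \<noteq> \<one>" using h one by auto
  have lag: "card (rcosets S) * card S = order G" using lagrange[OF S] .
  have re: "realizes G (card S) 2 2"
    unfolding realizes_def
    apply (rule exI[of _ S], rule exI[of _ "{\<one>, b}"], rule exI[of _ "{\<one>, c}"])
    using Ssub bc one b1 c1 tpp_S[OF S bc h] by auto
  define A where "A = {n * p * m | n p m. realizes G n p m}"
  have bound: "\<And>n p m. realizes G n p m \<Longrightarrow> n * p * m \<le> order G ^ 3"
  proof -
    fix n p m assume "realizes G n p m"
    then obtain S1 S2 S3 where "S1 \<subseteq> carrier G" "S2 \<subseteq> carrier G" "S3 \<subseteq> carrier G"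
      "card S1 = n" "card S2 = p" "card S3 = m" unfolding realizes_def by blast
    hence "n \<le> order G" "p \<le> order G" "m \<le> order G"
      using card_mono[OF fin] unfolding order_def by auto
    hence "n * p * m \<le> order G * order G * order G" by (intro mult_le_mono) auto
    thus "n * p * m \<le> order G ^ 3" by (simp add: power3_eq_cube)
  qed
  have finA: "finite A"
    by (rule finite_subset[of _ "{..order G ^ 3}"]) (auto simp: A_def dest: bound)
  have "card S * 2 * 2 \<in> A" using re A_def by blast
  hence "card S * 2 * 2 \<le> tpp_capacity G" unfolding tpp_capacity_def A_def[symmetric]
    using finA by simp
  hence "real (card S * 4) \<le> real (tpp_capacity G)" by simp
  moreover have "real (order G) = 3 * real (card S)" using lag c3
    by (metis of_nat_mult of_nat_numeral)
  ultimately show ?thesis by simp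
qed


end

theorem mainTheorem4:
  fixes G :: "('a, 'b) monoid_scheme"
  assumes "group G"
    and "finite (carrier G)"
    and "\<not> comm_group G"
    and "\<exists>S. subgroup S G \<and> \<not> (S \<lhd> G) \<and> card (rcosets\<^bsub>G\<^esub> S) = 3"
  shows "real (tpp_capacity G) \<ge> 4 / 3 * real (order G)"
  using assms(4) group.main_in[OF assms(1) assms(2)] by blast

end
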